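(* Let $p \ge 2$, let $\beta_0,\beta_1,\dots,\beta_p \in \mathbb{R}$ with $\beta_j \neq 0$ for all $j\in\{1,\dots,p\}$, and consider the linear classifier $f:\mathbb{R}^p\to\{0,1\}$, $f(\boldsymbol{x}) = \mathbf{1}\big[\beta_0 + \sum_{j=1}^p \beta_j x_j > 0\big]$. Let $\tilde{\boldsymbol{x}}\in\mathbb{R}^p$ be a reference point with $f(\tilde{\boldsymbol{x}})=0$, and let $g^{\mathrm{ref}}(\boldsymbol{\beta}) = \beta_0 + \sum_{j=1}^p \beta_j \tilde{x}_j$ be the raw score at the reference. Then for every $k\in\{2,3,\dots,p\}$, the volume (Lebesgue measure) $V_k$ of the region $\{\boldsymbol{x}\in\mathbb{R}^p : f(\boldsymbol{x})=1,\ \mathrm{SEV}^+(\boldsymbol{x}) = k\}$ satisfies $$V_k = c_k \cdot \prod_{j=1}^p \left| \frac{g^{\mathrm{ref}}(\boldsymbol{\beta})}{\beta_j}\right|,$$ where $c_k$ is a finite constant that does not depend on $\beta_0,\beta_1,\dots,\beta_p$.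
   Context: For a classifier $f:\mathbb{R}^p\to\{0,1\}$, a reference $\tilde{\boldsymbol{x}}\in\mathbb{R}^p$ and a query $\boldsymbol{x}$ with $f(\boldsymbol{x})=1$, each Boolean vector $\boldsymbol{b}\in\{0,1\}^p$ determines the point $\boldsymbol{x}_{\boldsymbol{b}} := \boldsymbol{b}\odot \boldsymbol{x} + (\mathbf{1}-\boldsymbol{b})\odot\tilde{\boldsymbol{x}}$ (coordinate $j$ equals $x_j$ if $b_j=1$ and $\tilde{x}_j$ if $b_j=0$; $\odot$ is the coordinatewise product). The Sparse Explanation Value Plus of the query is $\mathrm{SEV}^+(\boldsymbol{x}) := \min\{\|\boldsymbol{b}\|_0 : \boldsymbol{b}\in\{0,1\}^p,\ f(\boldsymbol{x}_{\boldsymbol{b}})=1\}$, i.e. the minimum number of coordinates of the reference that must be replaced by the query's values to obtain a positive prediction. *)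

theory Defs
  imports "HOL-Analysis.Analysis"
begin

text \<open>Dimension p is the cardinality of the finite index type 'n; points of R^p are
  vectors of type real^'n. A Boolean vector b in {0,1}^p is a function 'n => bool
  (b j = True meaning b_j = 1); its l0-norm is the number of indices with b j.\<close>

definition mix_point :: "('n::finite \<Rightarrow> bool) \<Rightarrow> real^'n \<Rightarrow> real^'n \<Rightarrow> real^'n" where
  "mix_point b x xref = (\<chi> j. if b j then x $ j else xref $ j)"

definition l0_norm :: "('n::finite \<Rightarrow> bool) \<Rightarrow> nat" where
  "l0_norm b = card {j. b j}"

definition sev_plus :: "(real^'n::finite \<Rightarrow> nat) \<Rightarrow> real^'n \<Rightarrow> real^'n \<Rightarrow> nat" where
  "sev_plus f xref x = Min {l0_norm b | b. f (mix_point b x xref) = 1}"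

definition lin_clf :: "real \<Rightarrow> real^'n::finite \<Rightarrow> real^'n \<Rightarrow> nat" where
  "lin_clf beta0 beta x = (if beta0 + (\<Sum>j\<in>UNIV. beta $ j * x $ j) > 0 then 1 else 0)"

end

theory Submission
  imports Defs
begin

lemma sev_char:
  fixes f :: "real^'n::finite \<Rightarrow> nat"
  assumes "f x = 1"
  shows "sev_plus f xref x = k \<longleftrightarrow>
     (\<exists>b. l0_norm b = k \<and> f (mix_point b x xref) = 1) \<and>
     (\<forall>b. l0_norm b < k \<longrightarrow> f (mix_point b x xref) \<noteq> 1)"
proof -
  let ?A = "{l0_norm b | b. f (mix_point b x xref) = 1}"
  have fin: "finite ?A"
    by (rule finite_subset[of _ "range l0_norm"]) auto
  have "mix_point (\<lambda>_::'n. True) x xref = x" by (simp add: mix_point_def)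
  then have "l0_norm (\<lambda>_::'n. True) \<in> ?A" using assms by (auto intro!: exI[of _ "\<lambda>_. True"])
  then have ne: "?A \<noteq> {}" by blast
  have "Min ?A = k \<longleftrightarrow> k \<in> ?A \<and> (\<forall>a\<in>?A. k \<le> a)"
    by (rule Min_eq_iff[OF fin ne])
  also have "\<dots> \<longleftrightarrow> (\<exists>b. l0_norm b = k \<and> f (mix_point b x xref) = 1) \<and>
     (\<forall>b. l0_norm b < k \<longrightarrow> f (mix_point b x xref) \<noteq> 1)"
  proof -
    have a: "k \<in> ?A \<longleftrightarrow> (\<exists>b. l0_norm b = k \<and> f (mix_point b x xref) = 1)" by blast
    have b: "(\<forall>a\<in>?A. k \<le> a) \<longleftrightarrow> (\<forall>b. l0_norm b < k \<longrightarrow> f (mix_point b x xref) \<noteq> 1)"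
    proof
      assume h: "\<forall>a\<in>?A. k \<le> a"
      show "\<forall>b. l0_norm b < k \<longrightarrow> f (mix_point b x xref) \<noteq> 1"
      proof (intro allI impI notI)
        fix b assume "l0_norm b < k" "f (mix_point b x xref) = 1"
        then show False using h by force
      qed
    next
      assume h: "\<forall>b. l0_norm b < k \<longrightarrow> f (mix_point b x xref) \<noteq> 1"
      show "\<forall>a\<in>?A. k \<le> a"
      proof
        fix a assume "a \<in> ?A"
        then obtain b where "a = l0_norm b" "f (mix_point b x xref) = 1" by blast
        then show "k \<le> a" using h not_less by blast
      qed
    qed
    show ?thesis using a b by simp
  qed
  finally show ?thesis unfolding sev_plus_def .
qed

definition Tk :: "nat \<Rightarrow> (real^'n::finite) set" where
  "Tk k = {y. 1 < (\<Sum>j\<in>UNIV. y $ j) \<and>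
     (\<exists>b. l0_norm b = k \<and> 1 < (\<Sum>j\<in>{j. b j}. y $ j)) \<and>
     (\<forall>b. l0_norm b < k \<longrightarrow> \<not> 1 < (\<Sum>j\<in>{j. b j}. y $ j))}"

lemma pred_open:
  fixes g :: "real^'n::finite \<Rightarrow> real"
  assumes "continuous_on UNIV g"
  shows "{x. 0 < g x} \<in> sets borel"
proof -
  have "open {x. 0 < g x}"
    using open_Collect_less[OF continuous_on_const assms] by simp
  then show ?thesis by simp
qed

lemma gen_meas:
  fixes F :: "('n::finite \<Rightarrow> bool) \<Rightarrow> real^'n \<Rightarrow> bool"
  assumes "\<And>b. {x. F b x} \<in> sets borel"
  shows "{x. F (\<lambda>_. True) x \<and> (\<exists>b. l0_norm b = k \<and> F b x) \<and>
     (\<forall>b. l0_norm b < k \<longrightarrow> \<not> F b x)} \<in> sets borel"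
proof -
  have e: "{x. F (\<lambda>_. True) x \<and> (\<exists>b. l0_norm b = k \<and> F b x) \<and>
     (\<forall>b. l0_norm b < k \<longrightarrow> \<not> F b x)} =
     {x. F (\<lambda>_. True) x} \<inter> {x\<in>space borel. \<exists>b\<in>{b. l0_norm b = k}. F b x}
       \<inter> {x\<in>space borel. \<forall>b\<in>{b. l0_norm b < k}. \<not> F b x}" by auto
  have 1: "{x\<in>space borel. \<exists>b\<in>{b. l0_norm b = k}. F b x} \<in> sets (borel :: (real^'n) measure)"
    by (rule sets.sets_Collect_finite_Ex) (use assms in auto)
  have 2: "{x\<in>space borel. \<forall>b\<in>{b. l0_norm b < k}. \<not> F b x} \<in> sets (borel :: (real^'n) measure)"
  proof (rule sets.sets_Collect_finite_All)
    fix b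
    have "{x\<in>space borel. \<not> F b x} = space borel - {x. F b x}" by auto
    then show "{x\<in>space borel. \<not> F b x} \<in> sets (borel :: (real^'n) measure)"
      using assms by auto
  qed auto
  show ?thesis unfolding e by (intro sets.Int 1 2 assms)
qed

lemma mix_score:
  fixes beta :: "real^'n::finite"
  shows "beta0 + (\<Sum>j\<in>UNIV. beta $ j * mix_point b x xref $ j) =
    (beta0 + (\<Sum>j\<in>UNIV. beta $ j * xref $ j)) + (\<Sum>j\<in>{j. b j}. beta $ j * (x $ j - xref $ j))"
proof -
  have "\<And>j. beta $ j * mix_point b x xref $ j =
      beta $ j * xref $ j + (if b j then beta $ j * (x $ j - xref $ j) else 0)"
    by (simp add: mix_point_def algebra_simps)
  then have "(\<Sum>j\<in>UNIV. beta $ j * mix_point b x xref $ j) =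
      (\<Sum>j\<in>UNIV. beta $ j * xref $ j) + (\<Sum>j\<in>UNIV. if b j then beta $ j * (x $ j - xref $ j) else 0)"
    by (simp add: sum.distrib)
  also have "(\<Sum>j\<in>UNIV. if b j then beta $ j * (x $ j - xref $ j) else 0) =
      (\<Sum>j\<in>{j. b j}. beta $ j * (x $ j - xref $ j))"
    using sum.inter_filter[of UNIV "\<lambda>j. beta $ j * (x $ j - xref $ j)" b] by simp
  finally show ?thesis by simp
qed

lemma lin_clf_eq: "lin_clf beta0 beta x = 1 \<longleftrightarrow> 0 < beta0 + (\<Sum>j\<in>UNIV. beta $ j * x $ j)"
  by (simp add: lin_clf_def)

lemma Tk_meas: "Tk k \<in> sets (borel :: (real^'n::finite) measure)"
proof -
  have "Tk k = {y::real^'n. (\<lambda>b y. 1 < (\<Sum>j\<in>{j. b j}. y $ j)) (\<lambda>_. True) y \<and>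
     (\<exists>b. l0_norm b = k \<and> (\<lambda>b y. 1 < (\<Sum>j\<in>{j. b j}. y $ j)) b y) \<and>
     (\<forall>b. l0_norm b < k \<longrightarrow> \<not> (\<lambda>b y. 1 < (\<Sum>j\<in>{j. b j}. y $ j)) b y)}"
    by (simp add: Tk_def)
  also have "\<dots> \<in> sets borel"
  proof (rule gen_meas)
    fix b :: "'n \<Rightarrow> bool"
    have "{y::real^'n. 1 < (\<Sum>j\<in>{j. b j}. y $ j)} = {y. 0 < (\<Sum>j\<in>{j. b j}. y $ j) - 1}" by auto
    also have "\<dots> \<in> sets borel"
      by (rule pred_open) (intro continuous_intros)
    finally show "{y. (\<lambda>b y. 1 < (\<Sum>j\<in>{j. b j}. y $ j)) b y} \<in> sets (borel :: (real^'n) measure)" by simp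
  qed
  finally show ?thesis .
qed

lemma Tk_bounded:
  assumes "2 \<le> k"
  shows "Tk k \<subseteq> cbox (\<chi> _. 1 - real CARD('n::finite)) (\<chi> _. 1 :: real^'n)"
proof
  fix y :: "real^'n" assume y: "y \<in> Tk k"
  have le1: "y $ j \<le> 1" for j
  proof -
    have "l0_norm (\<lambda>i. i = j) < k" using assms by (simp add: l0_norm_def)
    then have "\<not> 1 < (\<Sum>i\<in>{i. i = j}. y $ i)" using y by (auto simp: Tk_def)
    then show ?thesis by simp
  qed
  have "y $ j \<ge> 1 - real CARD('n)" for j
  proof -
    have "(\<Sum>i\<in>UNIV. y $ i) = y $ j + (\<Sum>i\<in>UNIV - {j}. y $ i)"
      by (simp add: sum.remove)
    moreover have "(\<Sum>i\<in>UNIV - {j}. y $ i) \<le> real (card (UNIV - {j} :: 'n set)) * 1"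
      by (rule sum_bounded_above) (use le1 in auto)
    moreover have "card (UNIV - {j} :: 'n set) \<le> CARD('n)" by (rule card_mono) auto
    moreover have "1 < (\<Sum>i\<in>UNIV. y $ i)" using y by (simp add: Tk_def)
    ultimately show ?thesis by linarith
  qed
  then show "y \<in> cbox (\<chi> _. 1 - real CARD('n)) (\<chi> _. 1)"
    using le1 by (simp add: mem_box_cart)
qed

lemma Tk_finite:
  assumes "2 \<le> k"
  shows "emeasure lborel (Tk k :: (real^'n::finite) set) = ennreal (measure lborel (Tk k :: (real^'n) set))"
proof -
  have "bounded (Tk k :: (real^'n) set)"
    using Tk_bounded[OF assms] bounded_cbox bounded_subset by blast
  then have "emeasure lborel (Tk k :: (real^'n) set) < \<infinity>" by (rule emeasure_bounded_finite)
  then show ?thesis by (intro emeasure_eq_ennreal_measure) auto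
qed

theorem theorem4p1:
  fixes k :: nat
  assumes "CARD('n::finite) \<ge> 2"
    and "2 \<le> k" and "k \<le> CARD('n)"
  shows "\<exists>c::real. \<forall>(beta0::real) (beta::real^'n) (xref::real^'n).
           (\<forall>j. beta $ j \<noteq> 0) \<longrightarrow> lin_clf beta0 beta xref = 0 \<longrightarrow>
           (let S = {x. lin_clf beta0 beta x = 1 \<and> sev_plus (lin_clf beta0 beta) xref x = k};
                g = beta0 + (\<Sum>j\<in>UNIV. beta $ j * xref $ j)
            in S \<in> sets lborel \<and>
               emeasure lborel S = ennreal (c * (\<Prod>j\<in>UNIV. \<bar>g / beta $ j\<bar>)))"
proof -
  let ?c = "measure lborel (Tk k :: (real^'n) set)"
  show ?thesis
  proof (intro exI[of _ ?c] allI impI)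
    fix beta0 :: real and beta xref :: "real^'n"
    assume nz: "\<forall>j. beta $ j \<noteq> 0" and f0: "lin_clf beta0 beta xref = 0"
    define g where "g = beta0 + (\<Sum>j\<in>UNIV. beta $ j * xref $ j)"
    define F where "F b x \<longleftrightarrow> lin_clf beta0 beta (mix_point b x xref) = 1" for b x
    define S where "S = {x. lin_clf beta0 beta x = 1 \<and> sev_plus (lin_clf beta0 beta) xref x = k}"
    have g0: "g \<le> 0" using f0 by (simp add: g_def lin_clf_def split: if_splits)
    have Fs: "F b x \<longleftrightarrow> 0 < g + (\<Sum>j\<in>{j. b j}. beta $ j * (x $ j - xref $ j))" for b x
      unfolding F_def lin_clf_eq mix_score g_def ..
    have mixT: "mix_point (\<lambda>_. True) x xref = x" for x by (simp add: mix_point_def)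
    have Seq: "S = {x. F (\<lambda>_. True) x \<and> (\<exists>b. l0_norm b = k \<and> F b x) \<and>
       (\<forall>b. l0_norm b < k \<longrightarrow> \<not> F b x)}"
      unfolding S_def F_def mixT using sev_char[of "lin_clf beta0 beta"] by auto
    have Smeas: "S \<in> sets borel"
      unfolding Seq
    proof (rule gen_meas)
      fix b
      have "{x. F b x} = {x. 0 < g + (\<Sum>j\<in>{j. b j}. beta $ j * (x $ j - xref $ j))}"
        using Fs by auto
      also have "\<dots> \<in> sets borel"
        by (rule pred_open) (intro continuous_intros)
      finally show "{x. F b x} \<in> sets borel" .
    qed
    have "S \<in> sets lborel \<and> emeasure lborel S = ennreal (?c * (\<Prod>j\<in>UNIV. \<bar>g / beta $ j\<bar>))"
    proof (cases "g = 0")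
      case True
      have "S = {}"
      proof (rule ccontr)
        assume "S \<noteq> {}"
        then obtain x where x: "x \<in> S" by blast
        then have "F (\<lambda>_. True) x" by (simp add: Seq)
        then have "0 < (\<Sum>j\<in>UNIV. beta $ j * (x $ j - xref $ j))" using True by (simp add: Fs)
        have "\<exists>j. 0 < beta $ j * (x $ j - xref $ j)"
        proof (rule ccontr)
          assume "\<not> (\<exists>j. 0 < beta $ j * (x $ j - xref $ j))"
          then have "(\<Sum>j\<in>UNIV. beta $ j * (x $ j - xref $ j)) \<le> 0"
            by (intro sum_nonpos) (simp add: not_less)
          with \<open>0 < (\<Sum>j\<in>UNIV. beta $ j * (x $ j - xref $ j))\<close> show False by simp
        qed
        then obtain j where j: "0 < beta $ j * (x $ j - xref $ j)" by blast
        have "F (\<lambda>i. i = j) x" using j True by (simp add: Fs)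
        moreover have "l0_norm (\<lambda>i. i = j) < k" using assms by (simp add: l0_norm_def)
        ultimately show False using x by (auto simp: Seq)
      qed
      moreover have "(\<Prod>j\<in>UNIV. \<bar>g / beta $ j\<bar>) = 0" using True by simp
      then have z: "?c * (\<Prod>j\<in>UNIV. \<bar>g / beta $ j\<bar>) = 0" by (simp only: mult_zero_right)
      ultimately show ?thesis
        by (simp only: z emeasure_empty ennreal_0 sets.empty_sets simp_thms)
    next
      case False
      then have gneg: "g < 0" using g0 by simp
      define d where "d = (\<chi> i. - g / beta $ i)"
      have dnz: "d $ i \<noteq> 0" for i using nz gneg by (simp add: d_def)
      define T where "T y = xref + (\<Sum>j\<in>Basis. ((d \<bullet> j) * (y \<bullet> j)) *\<^sub>R j)" for y :: "real^'n"
      have Teq: "T y = (\<chi> i. xref $ i + d $ i * y $ i)" for y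
      proof -
        have "(\<Sum>j\<in>Basis. ((d \<bullet> j) * (y \<bullet> j)) *\<^sub>R j) = (\<chi> i. (d \<bullet> axis i 1) * (y \<bullet> axis i 1))"
          by (rule vector_cart[symmetric])
        also have "\<dots> = (\<chi> i. d $ i * y $ i)" by (simp add: inner_axis)
        finally show ?thesis by (simp add: T_def vec_eq_iff)
      qed
      have cnz: "j \<in> Basis \<Longrightarrow> d \<bullet> j \<noteq> 0" for j
        using dnz by (auto simp: inner_axis dest!: axis_inverse)
      have L: "lborel = density (distr lborel borel T) (\<lambda>_. (\<Prod>j\<in>Basis. \<bar>d \<bullet> j\<bar>))"
        unfolding T_def by (rule lborel_affine_euclidean) (use cnz in auto)
      have Tmeas: "T \<in> lborel \<rightarrow>\<^sub>M borel"
        unfolding T_def by simp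
      have pre: "T -` S = Tk k"
      proof -
        have FT: "F b (T y) \<longleftrightarrow> 1 < (\<Sum>j\<in>{j. b j}. y $ j)" for b y
        proof -
          have "(\<Sum>j\<in>{j. b j}. beta $ j * (T y $ j - xref $ j)) = (\<Sum>j\<in>{j. b j}. (- g) * y $ j)"
            using nz by (intro sum.cong) (auto simp: Teq d_def)
          also have "\<dots> = (- g) * (\<Sum>j\<in>{j. b j}. y $ j)" by (simp add: sum_distrib_left)
          finally have "F b (T y) \<longleftrightarrow> 0 < g + (- g) * (\<Sum>j\<in>{j. b j}. y $ j)" by (simp add: Fs)
          also have "\<dots> \<longleftrightarrow> 0 < (- g) * ((\<Sum>j\<in>{j. b j}. y $ j) - 1)" by (simp add: algebra_simps)
          also have "\<dots> \<longleftrightarrow> 1 < (\<Sum>j\<in>{j. b j}. y $ j)" using gneg by (simp add: mult_less_0_iff)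
          finally show ?thesis .
        qed
        show ?thesis unfolding Seq Tk_def using FT by auto
      qed
      have "emeasure lborel S = emeasure (density (distr lborel borel T) (\<lambda>_. (\<Prod>j\<in>Basis. \<bar>d \<bullet> j\<bar>))) S"
        using arg_cong[where f="\<lambda>M. emeasure M S", OF L] .
      also have "\<dots> = (\<Prod>j\<in>Basis. \<bar>d \<bullet> j\<bar>) * emeasure (distr lborel borel T) S"
        using Smeas by (simp add: emeasure_density nn_integral_cmult_indicator)
      also have "\<dots> = (\<Prod>j\<in>Basis. \<bar>d \<bullet> j\<bar>) * emeasure lborel (Tk k :: (real^'n) set)"
        using Smeas Tmeas by (simp add: emeasure_distr pre)
      also have "(\<Prod>j\<in>Basis. \<bar>d \<bullet> j\<bar>) = (\<Prod>i\<in>UNIV. \<bar>g / beta $ i\<bar>)"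
      proof -
        have B: "(Basis :: (real^'n) set) = range (\<lambda>i. axis i 1)" by (auto simp: Basis_vec_def)
        have "inj (\<lambda>i::'n. axis i (1::real))" by (auto simp: inj_def axis_eq_axis)
        then have "(\<Prod>j\<in>Basis. \<bar>d \<bullet> j\<bar>) = (\<Prod>i\<in>UNIV. \<bar>d \<bullet> axis i 1\<bar>)"
          unfolding B by (simp add: prod.reindex)
        also have "\<dots> = (\<Prod>i\<in>UNIV. \<bar>g / beta $ i\<bar>)"
          by (simp add: inner_axis d_def)
        finally show ?thesis .
      qed
      finally have "emeasure lborel S = ennreal (\<Prod>i\<in>UNIV. \<bar>g / beta $ i\<bar>) * ennreal ?c"
        using Tk_finite[where 'n='n, OF assms(2)] by simp
      also have "\<dots> = ennreal (?c * (\<Prod>j\<in>UNIV. \<bar>g / beta $ j\<bar>))"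
        by (simp add: ennreal_mult prod_nonneg mult.commute)
      finally show ?thesis using Smeas by simp
    qed
    then show "let S = {x. lin_clf beta0 beta x = 1 \<and> sev_plus (lin_clf beta0 beta) xref x = k};
                g = beta0 + (\<Sum>j\<in>UNIV. beta $ j * xref $ j)
            in S \<in> sets lborel \<and>
               emeasure lborel S = ennreal (?c * (\<Prod>j\<in>UNIV. \<bar>g / beta $ j\<bar>))"
      unfolding S_def g_def Let_def .
  qed
qed

end
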